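(* For all real $\alpha,\beta$ with $\beta\neq0$, every integer $n\ge0$ and every real $x$, \[ x^n=\sum_{k=0}^{n}\widetilde S_{\alpha,\beta}(n,k)\,P_k^{(\alpha,\beta)}(x),\qquad\text{where }\ \widetilde S_{\alpha,\beta}(n,k)=(-1)^{n-k}S_{-\alpha/\beta,\,1/\beta}(n,k). \]
   Context: For real $a$ and integer $n\ge 1$, $\langle a\rangle_n:=a(a+1)\cdots(a+n-1)$ and $\langle a\rangle_0:=1$. For real $\alpha,\beta$ with $\beta\neq0$, the polynomials $P_n^{(\alpha,\beta)}(x)$, $n\ge0$, are defined by $\sum_{n\ge0}P_n^{(\alpha,\beta)}(x)\frac{t^n}{n!}=(1-t)^{\alpha}\exp\big(x((1-t)^{\beta}-1)\big)$ (formal power series in $t$). For real $\alpha,\beta$ and integers $0\le k\le n$, $S_{\alpha,\beta}(n,k):=\frac{1}{k!}\sum_{j=0}^{k}(-1)^{k-j}\binom{k}{j}\langle-\alpha-\beta j\rangle_n$. *)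

theory Defs
  imports Complex_Main "HOL-Computational_Algebra.Formal_Power_Series"
begin

definition one_minus_t_pow :: "real \<Rightarrow> real fps" where
  "one_minus_t_pow a = fps_binomial a oo (- fps_X)"

definition P_gf :: "real \<Rightarrow> real \<Rightarrow> real \<Rightarrow> real fps" where
  "P_gf \<alpha> \<beta> x = one_minus_t_pow \<alpha> *
      (fps_exp 1 oo (fps_const x * (one_minus_t_pow \<beta> - 1)))"

definition P :: "real \<Rightarrow> real \<Rightarrow> nat \<Rightarrow> real \<Rightarrow> real" where
  "P \<alpha> \<beta> n x = fact n * fps_nth (P_gf \<alpha> \<beta> x) n"

definition S :: "real \<Rightarrow> real \<Rightarrow> nat \<Rightarrow> nat \<Rightarrow> real" where
  "S \<alpha> \<beta> n k = (1 / fact k) *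
     (\<Sum>j=0..k. (-1) ^ (k - j) * real (k choose j) * pochhammer (- \<alpha> - \<beta> * real j) n)"

end

theory Submission
  imports Defs
begin
unbundle fps_syntax

lemma binom_compose:
  fixes a b :: real
  shows "fps_binomial a oo (fps_binomial b - 1) = fps_binomial (a*b)"
proof -
  define D where "D = fps_binomial b - 1"
  have D0: "D $ 0 = 0" by (simp add: D_def)
  define f where "f = fps_binomial a oo D"
  have u: "(1 + fps_X :: real fps) $ 0 \<noteq> 0" by simp
  have dA: "fps_deriv (fps_binomial a) = fps_const a * fps_binomial a * inverse (1 + fps_X)"
    by (simp add: fps_binomial_deriv fps_divide_unit)
  have dB: "fps_deriv D = fps_const b * fps_binomial b * inverse (1 + fps_X)"
    by (simp add: D_def fps_binomial_deriv fps_divide_unit)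
  have cX: "(1 + fps_X) oo D = fps_binomial b"
    by (simp add: fps_compose_add_distrib D0 D_def)
  have "(inverse (1 + fps_X) oo D) * fps_binomial b = (inverse (1 + fps_X) * (1 + fps_X)) oo D"
    by (simp add: fps_compose_mult_distrib[OF D0] cX)
  also have "\<dots> = 1" using inverse_mult_eq_1[OF u] by simp
  finally have iv: "(inverse (1 + fps_X) oo D) * fps_binomial b = 1" .
  have "fps_deriv f = (fps_deriv (fps_binomial a) oo D) * fps_deriv D"
    unfolding f_def by (rule fps_compose_deriv[OF D0])
  also have "\<dots> = fps_const a * f * ((inverse (1 + fps_X) oo D) * fps_binomial b) * fps_const b * inverse (1 + fps_X)"
  proof -
    have "fps_deriv (fps_binomial a) oo D = fps_const a * f * (inverse (1 + fps_X) oo D)"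
      unfolding dA f_def fps_compose_mult_distrib[OF D0] fps_const_compose ..
    then show ?thesis unfolding dB by (simp only: mult_ac)
  qed
  also have "\<dots> = fps_const (a*b) * f / (1 + fps_X)"
  proof -
    have "fps_const a * f * ((inverse (1 + fps_X) oo D) * fps_binomial b) * fps_const b * inverse (1 + fps_X)
       = fps_const a * fps_const b * f * inverse (1 + fps_X)" unfolding iv by (simp only: mult_ac mult_1_right mult_1_left)
    moreover have "fps_const (a*b) * f / (1 + fps_X) = fps_const (a*b) * f * inverse (1 + fps_X)"
      by (rule fps_divide_unit) simp
    ultimately show ?thesis by (simp only: fps_const_mult)
  qed
  finally have "fps_deriv f = fps_const (a*b) * f / (1 + fps_X)" .
  moreover have "f $ 0 = 1" by (simp add: f_def)
  ultimately show ?thesis using fps_binomial_ODE_unique'[of f "a*b"] by (simp add: f_def D_def)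
qed

lemma omt_compose:
  fixes a b :: real
  defines "C \<equiv> 1 - fps_binomial b"
  shows "one_minus_t_pow a oo C = fps_binomial (a*b)"
proof -
  have C0: "C $ 0 = 0" by (simp add: C_def)
  have "one_minus_t_pow a oo C = fps_binomial a oo ((- fps_X) oo C)"
    unfolding one_minus_t_pow_def by (rule fps_compose_assoc[symmetric]) (simp_all add: C0)
  also have "(- fps_X) oo C = fps_binomial b - 1"
    by (simp add: fps_compose_uminus C0 C_def)
  finally show ?thesis by (simp add: binom_compose)
qed

lemma prod_compose_nth:
  fixes D G C :: "real fps"
  assumes C0: "C $ 0 = 0"
  shows "(D * (G oo C)) $ n = (\<Sum>k=0..n. G $ k * (D * C^k) $ n)"
proof -
  have "(D * (G oo C)) $ n = (\<Sum>i=0..n. D $ i * (\<Sum>k=0..n. G $ k * (C^k) $ (n - i)))"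
    unfolding fps_mult_nth fps_compose_nth
  proof (rule sum.cong[OF refl])
    fix i assume "i \<in> {0..n}"
    have "(\<Sum>k=0..n-i. G $ k * (C^k) $ (n - i)) = (\<Sum>k=0..n. G $ k * (C^k) $ (n - i))"
      by (rule sum.mono_neutral_left) (auto simp: startsby_zero_power_prefix[OF C0])
    then show "D $ i * (\<Sum>k=0..n-i. G $ k * (C^k) $ (n - i)) = D $ i * (\<Sum>k=0..n. G $ k * (C^k) $ (n - i))"
      by simp
  qed
  also have "\<dots> = (\<Sum>k=0..n. G $ k * (\<Sum>i=0..n. D $ i * (C^k) $ (n - i)))"
    unfolding sum_distrib_left by (subst sum.swap) (simp only: mult_ac)
  finally show ?thesis by (simp add: fps_mult_nth)
qed

lemma binom_C_pow_nth:
  fixes b c :: real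
  shows "(fps_binomial c * (1 - fps_binomial b)^k) $ n
     = (\<Sum>j=0..k. real (k choose j) * (-1)^j * ((c + real j * b) gchoose n))"
proof -
  have "(1 - fps_binomial b)^k = (- fps_binomial b + 1)^k" by simp
  also have "\<dots> = (\<Sum>j\<le>k. of_nat (k choose j) * (- fps_binomial b)^j * 1^(k-j))"
    by (rule binomial_ring)
  also have "\<dots> = (\<Sum>j=0..k. fps_const (real (k choose j) * (-1)^j) * fps_binomial (real j * b))"
  proof (intro sum.cong)
    fix j assume "j \<in> {0..k}"
    have e: "(- fps_binomial b)^j = fps_const ((-1)^j) * fps_binomial (real j * b)"
    proof -
      have m1: "fps_const (-1::real) = -1" using fps_const_neg[of "1::real"] by simp
      have "(-1::real fps)^j = fps_const ((-1)^j)"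
        unfolding fps_const_power[symmetric] m1 ..
      then show ?thesis by (simp add: power_minus' fps_binomial_power)
    qed
    have ch: "of_nat (k choose j) = fps_const (real (k choose j))" by (rule fps_of_nat[symmetric])
    show "of_nat (k choose j) * (- fps_binomial b)^j * 1^(k-j) = fps_const (real (k choose j) * (-1)^j) * fps_binomial (real j * b)"
      unfolding e ch by (simp only: fps_const_mult[symmetric] mult_ac power_one mult_1_right mult_1_left)
  qed (auto simp: atMost_atLeast0)
  finally have e2: "(1 - fps_binomial b)^k = (\<Sum>j=0..k. fps_const (real (k choose j) * (-1)^j) * fps_binomial (real j * b))" .
  have "fps_binomial c * (1 - fps_binomial b)^k
     = (\<Sum>j=0..k. fps_const (real (k choose j) * (-1)^j) * fps_binomial (c + real j * b))"
    unfolding e2 sum_distrib_left by (intro sum.cong refl) (simp only: fps_binomial_add_mult mult_ac)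
  then show ?thesis by (simp only: fps_sum_nth fps_mult_left_const_nth fps_binomial_nth)
qed

lemma sign_lemma:
  assumes "j \<le> k" "k \<le> n"
  shows "(-1::real)^(n-k) * (-1)^(k-j) = (-1)^n * (-1)^j"
proof -
  have a: "(-1::real)^(n-k) * (-1)^(k-j) = (-1)^(n-j)" using assms by (simp flip: power_add)
  have n: "(-1::real)^n = (-1)^(n-j) * (-1)^j" using assms by (simp flip: power_add)
  have jj: "(-1::real)^j * (-1)^j = 1" by (simp flip: power_add)
  show ?thesis unfolding a n mult.assoc jj by simp
qed

theorem proposition2:
  fixes \<alpha> \<beta> x :: real and n :: nat
  assumes "\<beta> \<noteq> 0"
  shows "x ^ n = (\<Sum>k=0..n. ((-1) ^ (n - k) * S (- \<alpha> / \<beta>) (1 / \<beta>) n k) * P \<alpha> \<beta> k x)"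
proof -
  define C where "C = 1 - fps_binomial (1/\<beta>)"
  have C0: "C $ 0 = 0" by (simp add: C_def)
  define G where "G = P_gf \<alpha> \<beta> x"
  define Q where "Q = fps_const x * (one_minus_t_pow \<beta> - 1)"
  have Q0: "Q $ 0 = 0" by (simp add: Q_def one_minus_t_pow_def)
  have QC: "Q oo C = fps_const x * fps_X"
  proof -
    have "Q oo C = fps_const x * ((one_minus_t_pow \<beta> oo C) - 1)"
      unfolding Q_def fps_const_mult_apply_left[symmetric] fps_compose_sub_distrib by simp
    also have "one_minus_t_pow \<beta> oo C = fps_binomial 1"
      unfolding C_def omt_compose using assms by simp
    finally show ?thesis by (simp add: fps_binomial_1)
  qed
  have "G oo C = (one_minus_t_pow \<alpha> oo C) * ((fps_exp 1 oo Q) oo C)"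
    unfolding G_def P_gf_def Q_def by (rule fps_compose_mult_distrib[OF C0])
  also have "(fps_exp 1 oo Q) oo C = fps_exp 1 oo (Q oo C)"
    by (rule fps_compose_assoc[symmetric, OF C0 Q0])
  also have "\<dots> = fps_exp x" unfolding QC by simp
  also have "one_minus_t_pow \<alpha> oo C = fps_binomial (\<alpha> / \<beta>)"
    unfolding C_def omt_compose by simp
  finally have GC: "G oo C = fps_binomial (\<alpha> / \<beta>) * fps_exp x" .
  have E: "fps_exp x = fps_binomial (- \<alpha> / \<beta>) * (G oo C)"
    unfolding GC mult.assoc[symmetric] fps_binomial_add_mult[symmetric] by simp
  have "x ^ n = fact n * fps_exp x $ n" by simp
  also have "\<dots> = fact n * (\<Sum>k=0..n. G $ k * (fps_binomial (- \<alpha> / \<beta>) * C^k) $ n)"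
    unfolding E prod_compose_nth[OF C0] ..
  also have "\<dots> = (\<Sum>k=0..n. ((-1) ^ (n - k) * S (- \<alpha> / \<beta>) (1 / \<beta>) n k) * P \<alpha> \<beta> k x)"
    unfolding sum_distrib_left
  proof (rule sum.cong[OF refl])
    fix k assume k: "k \<in> {0..n}"
    define T where "T j = (- 1) ^ (k - j) * real (k choose j) * pochhammer (- (- \<alpha> / \<beta>) - 1 / \<beta> * real j) n" for j
    have "fact n * (G $ k * (fps_binomial (- \<alpha> / \<beta>) * C^k) $ n)
       = (\<Sum>j=0..k. fact n * (G $ k * (real (k choose j) * (- 1) ^ j * (- \<alpha> / \<beta> + real j * (1 / \<beta>) gchoose n))))"
      unfolding C_def binom_C_pow_nth by (simp add: sum_distrib_left)
    also have "\<dots> = (\<Sum>j=0..k. fact k * G $ k * ((-1)^(n-k) * (1 / fact k) * T j))"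
    proof (rule sum.cong[OF refl])
        fix j assume j: "j \<in> {0..k}"
        have sg: "(-1::real)^(n-k) * (-1)^(k-j) = (-1)^n * (-1)^j" using j k by (intro sign_lemma) auto
        have ar: "- (- \<alpha> / \<beta> + real j * (1 / \<beta>)) = - (- \<alpha> / \<beta>) - 1 / \<beta> * real j" by simp
        show "fact n * (G $ k * (real (k choose j) * (- 1) ^ j * (- \<alpha> / \<beta> + real j * (1 / \<beta>) gchoose n))) =
          fact k * G $ k * ((- 1) ^ (n - k) * (1 / fact k) * T j)"
        proof -
          have "fact k * G $ k * ((- 1) ^ (n - k) * (1 / fact k) * T j)
             = G $ k * (((-1::real)^(n-k) * (-1)^(k-j)) * real (k choose j) * pochhammer (- (- \<alpha> / \<beta>) - 1 / \<beta> * real j) n)"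
            unfolding T_def by (simp add: field_simps)
          also have "\<dots> = G $ k * ((-1)^n * (-1)^j * real (k choose j) * pochhammer (- (- \<alpha> / \<beta>) - 1 / \<beta> * real j) n)"
            unfolding sg ..
          finally show ?thesis unfolding gbinomial_pochhammer ar by (simp add: field_simps) metis
        qed
    qed
    also have "\<dots> = fact k * G $ k * ((-1)^(n-k) * (1 / fact k) * (\<Sum>j=0..k. T j))"
      by (simp add: sum_distrib_left)
    finally have "fact n * (G $ k * (fps_binomial (- \<alpha> / \<beta>) * C^k) $ n)
      = fact k * G $ k * ((-1)^(n-k) * (1 / fact k) * (\<Sum>j=0..k. T j))" .
    then show "fact n * (G $ k * (fps_binomial (- \<alpha> / \<beta>) * C^k) $ n) =
         (-1) ^ (n - k) * S (- \<alpha> / \<beta>) (1 / \<beta>) n k * P \<alpha> \<beta> k x"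
      unfolding S_def P_def G_def T_def by (simp add: mult_ac)
  qed
  finally show ?thesis .
qed

end
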